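(* Let $T\in\mathcal{T}_{\mathrm{BV}}$, let $I\subseteq\mathbb{T}^1$ be an interval, $n\in\mathbb{N}$, and let $\varphi,\psi:I\to\mathbb{T}^1$ be measurable such that the sets $[\varphi,\psi],T([\varphi,\psi]),\dots,T^{n-1}([\varphi,\psi])$ are pairwise disjoint. Then for every $s>0$, $$\int_I\left(\frac{DT^n_\theta(\psi(\theta))}{DT^n_\theta(\varphi(\theta))}\right)^s d\theta\ \ge\ |I|\,e^{-\frac{sV(T)}{|I|}}.$$
   Context: $\mathbb{T}^1=\mathbb{R}/\mathbb{Z}$, $\mathbb{T}^2=\mathbb{T}^1\times\mathbb{T}^1$, $\omega\in[0,1)$ irrational, $|I|$ is the length of $I$. Maps $T(\theta,x)=(\theta+\omega,T_\theta(x))$ on $\mathbb{T}^2$, homotopic to the identity, whose fibre maps $T_\theta$ are orientation-preserving $C^1$ circle diffeomorphisms with $DT_\theta(x)$ continuous in $(\theta,x)$; $T^n_\theta:=(T^n)_\theta$. Let $V_\theta$ be the total variation of $\log DT_\theta$ on the circle, i.e. the supremum of $\sum_{i=1}^N|\log DT_\theta(x_i)-\log DT_\theta(x_{i-1})|$ over all $N$ and all points $x_0\le x_1\le\dots\le x_N=x_0$ going once around the circle, and $V(T):=\int_{\mathbb{T}^1}V_\theta\,d\theta$. $\mathcal{T}_{\mathrm{BV}}$ is the class of such $T$ with $V(T)<\infty$. For $\varphi,\psi:I\to\mathbb{T}^1$, $[\varphi,\psi]:=\{(\theta,x):\theta\in I,\ x\in[\varphi(\theta),\psi(\theta)]\}$,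 where $[a,b]$ is the closed arc from $a$ to $b$ in the positive direction. *)

theory Defs
  imports "HOL-Analysis.Analysis"
begin

text \<open>A point of the circle T^1 = R/Z is represented by its canonical
representative in [0,1) (via frac); a point of T^2 by a pair of such representatives.
A map T(theta,x) = (theta + omega, T_theta(x)) homotopic to the identity is given by
a continuous lift F :: real => real => real with F theta (x+1) = F theta x + 1
(lift of the fibre map T_theta) and F (theta+1) x = F theta x (homotopic to identity).\<close>

definition qpf_C1 :: "(real \<Rightarrow> real \<Rightarrow> real) \<Rightarrow> bool" where
  "qpf_C1 F \<longleftrightarrow>
     continuous_on UNIV (\<lambda>p. F (fst p) (snd p)) \<and>
     (\<forall>\<theta> x. F \<theta> (x + 1) = F \<theta> x + 1) \<and>
     (\<forall>\<theta> x. F (\<theta> + 1) x = F \<theta> x) \<and>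
     (\<forall>\<theta> x. F \<theta> differentiable (at x)) \<and>
     (\<forall>\<theta> x. deriv (F \<theta>) x > 0) \<and>
     continuous_on UNIV (\<lambda>p. deriv (F (fst p)) (snd p))"

definition Tmap :: "real \<Rightarrow> (real \<Rightarrow> real \<Rightarrow> real) \<Rightarrow> real \<times> real \<Rightarrow> real \<times> real" where
  "Tmap \<omega> F p = (frac (fst p + \<omega>), frac (F (fst p) (snd p)))"

fun Fiter :: "real \<Rightarrow> (real \<Rightarrow> real \<Rightarrow> real) \<Rightarrow> nat \<Rightarrow> real \<Rightarrow> real \<Rightarrow> real" where
  "Fiter \<omega> F 0 \<theta> = id"
| "Fiter \<omega> F (Suc n) \<theta> = F (\<theta> + real n * \<omega>) \<circ> Fiter \<omega> F n \<theta>"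

text \<open>Total variation of log DT_theta on the circle: partitions
x_0 <= x_1 <= ... <= x_N = x_0 + 1 of one full turn (in the lift).\<close>
definition fibre_var :: "(real \<Rightarrow> real \<Rightarrow> real) \<Rightarrow> real \<Rightarrow> ennreal" where
  "fibre_var F \<theta> =
     (SUP p \<in> {(N, xs). (\<forall>i<N. xs i \<le> xs (Suc i)) \<and> xs N = xs 0 + 1}.
        ennreal (\<Sum>i\<in>{1..fst p}.
          \<bar>ln (deriv (F \<theta>) (snd p i)) - ln (deriv (F \<theta>) (snd p (i - 1)))\<bar>))"

definition total_var :: "(real \<Rightarrow> real \<Rightarrow> real) \<Rightarrow> ennreal" where
  "total_var F = (\<integral>\<^sup>+ \<theta>\<in>{0..<1}. fibre_var F \<theta> \<partial>lborel)"

definition circ_arc :: "real \<Rightarrow> real \<Rightarrow> real set" where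
  "circ_arc a b = {frac (a + t) | t. 0 \<le> t \<and> t \<le> frac (b - a)}"

definition band :: "real set \<Rightarrow> (real \<Rightarrow> real) \<Rightarrow> (real \<Rightarrow> real) \<Rightarrow> (real \<times> real) set" where
  "band I \<phi> \<psi> = {(frac \<theta>, y) | \<theta> y. \<theta> \<in> I \<and> y \<in> circ_arc (\<phi> \<theta>) (\<psi> \<theta>)}"

end

theory Submission
  imports Defs
begin


lemma F_shift_int:
  assumes "\<forall>\<theta> x. F \<theta> (x + 1) = F \<theta> x + 1"
  shows "F \<theta> (x + of_int k) = F \<theta> x + of_int k"
proof (induction k rule: int_induct[where k=0])
  case base then show ?case by simp
next
  case (step1 i) then show ?case using assms[rule_format, of \<theta> "x + of_int i"] by (simp add: add.assoc)
next
  case (step2 i) then show ?case using assms[rule_format, of \<theta> "x + of_int (i - 1)"] by (simp add: algebra_simps)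
qed

lemma F_per_int:
  assumes "\<forall>\<theta> x. F (\<theta> + 1) x = F \<theta> x"
  shows "F (\<theta> + of_int k) = F \<theta>"
proof (induction k rule: int_induct[where k=0])
  case base then show ?case by simp
next
  case (step1 i) then show ?case using assms by (auto simp add: add.assoc[symmetric])
next
  case (step2 i) then show ?case using assms[rule_format, of "\<theta> + of_int (i - 1)"] by (auto simp add: algebra_simps)
qed

locale qpf =
  fixes \<omega> :: real and F :: "real \<Rightarrow> real \<Rightarrow> real"
  assumes Q: "qpf_C1 F"
begin

lemma cont: "continuous_on UNIV (\<lambda>p. F (fst p) (snd p))" using Q unfolding qpf_C1_def by blast
lemma shift1: "F \<theta> (x + 1) = F \<theta> x + 1" using Q unfolding qpf_C1_def by blast
lemma per1: "F (\<theta> + 1) x = F \<theta> x" using Q unfolding qpf_C1_def by blast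
lemma diff: "F \<theta> differentiable (at x)" using Q unfolding qpf_C1_def by blast
lemma dpos: "deriv (F \<theta>) x > 0" using Q unfolding qpf_C1_def by blast
lemma dcont: "continuous_on UNIV (\<lambda>p. deriv (F (fst p)) (snd p))" using Q unfolding qpf_C1_def by blast

lemma shift: "F \<theta> (x + of_int k) = F \<theta> x + of_int k"
  by (rule F_shift_int) (use shift1 in blast)
lemma per: "F (\<theta> + of_int k) = F \<theta>"
  by (rule F_per_int) (use per1 in blast)

lemma hasd: "(F \<theta> has_real_derivative deriv (F \<theta>) x) (at x)"
  using diff DERIV_deriv_iff_real_differentiable by blast

lemma deriv_shift: "deriv (F \<theta>) (x + of_int k) = deriv (F \<theta>) x"
proof -
  have a: "((\<lambda>y. F \<theta> (y + of_int k)) has_real_derivative deriv (F \<theta>) (x + of_int k)) (at x)"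
    using hasd[of \<theta> "x + of_int k"] DERIV_shift by blast
  have eq: "(\<lambda>y. F \<theta> (y + of_int k)) = (\<lambda>y. F \<theta> y + of_int k)" using shift by auto
  have b: "((\<lambda>y. F \<theta> y + of_int k) has_real_derivative deriv (F \<theta>) x) (at x)"
    using hasd[of \<theta> x] by (auto intro: derivative_eq_intros)
  from a have a': "((\<lambda>y. F \<theta> y + of_int k) has_real_derivative deriv (F \<theta>) (x + of_int k)) (at x)"
    by (simp only: eq)
  show ?thesis by (rule DERIV_unique[OF a' b])
qed

lemma contF: "continuous_on UNIV (F \<theta>)"
  by (intro continuous_at_imp_continuous_on ballI differentiable_imp_continuous_within diff)

lemma mono: "x < y \<Longrightarrow> F \<theta> x < F \<theta> y"
  by (rule DERIV_pos_imp_increasing[of x y "F \<theta>"]) (use hasd dpos in blast)+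

lemma Fiter_shift: "Fiter \<omega> F i \<theta> (x + of_int k) = Fiter \<omega> F i \<theta> x + of_int k"
  by (induction i) (auto simp: shift)

lemma Fiter_per: "Fiter \<omega> F i (\<theta> + of_int k) = Fiter \<omega> F i \<theta>"
proof (induction i)
  case (Suc i)
  have "\<theta> + of_int k + real i * \<omega> = (\<theta> + real i * \<omega>) + of_int k" by simp
  have "F (\<theta> + of_int k + real i * \<omega>) = F (\<theta> + real i * \<omega>)"
    using per[of "\<theta> + real i * \<omega>" k] by (simp add: algebra_simps)
  then show ?case using Suc by simp
qed simp

lemma Fiter_mono: "x < y \<Longrightarrow> Fiter \<omega> F i \<theta> x < Fiter \<omega> F i \<theta> y"
  by (induction i) (auto simp: mono)

lemma Fiter_cont: "continuous_on UNIV (\<lambda>p. Fiter \<omega> F i (fst p) (snd p))"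
proof (induction i)
  case 0 then show ?case by (simp add: continuous_on_snd)
next
  case (Suc i)
  have eq: "(\<lambda>p. Fiter \<omega> F (Suc i) (fst p) (snd p)) = (\<lambda>p. F (fst p) (snd p)) \<circ> (\<lambda>p. (fst p + real i * \<omega>, Fiter \<omega> F i (fst p) (snd p)))"
    by auto
  have c2: "continuous_on UNIV (\<lambda>p::real\<times>real. (fst p + real i * \<omega>, Fiter \<omega> F i (fst p) (snd p)))"
    by (intro continuous_intros Suc)
  show ?case unfolding eq by (rule continuous_on_compose[OF c2 continuous_on_subset[OF cont subset_UNIV]])
qed

lemma Fiter_cont1: "continuous_on UNIV (Fiter \<omega> F i \<theta>)"
proof -
  have "continuous_on UNIV ((\<lambda>p. Fiter \<omega> F i (fst p) (snd p)) \<circ> (\<lambda>x. (\<theta>, x)))"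
    by (intro continuous_on_compose continuous_on_subset[OF Fiter_cont] continuous_intros) auto
  then show ?thesis by (simp add: comp_def)
qed

lemma Fiter_deriv:
  "(Fiter \<omega> F i \<theta> has_real_derivative (\<Prod>j<i. deriv (F (\<theta> + real j * \<omega>)) (Fiter \<omega> F j \<theta> x))) (at x)"
proof (induction i)
  case 0 then show ?case by (simp add: id_def)
next
  case (Suc i)
  have "((F (\<theta> + real i * \<omega>) \<circ> Fiter \<omega> F i \<theta>) has_real_derivative
     deriv (F (\<theta> + real i * \<omega>)) (Fiter \<omega> F i \<theta> x) * (\<Prod>j<i. deriv (F (\<theta> + real j * \<omega>)) (Fiter \<omega> F j \<theta> x))) (at x)"
    by (rule DERIV_chain[OF hasd Suc])
  then show ?case by (simp add: mult.commute comp_def)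
qed

lemma Fiter_deriv_eq:
  "deriv (Fiter \<omega> F i \<theta>) x = (\<Prod>j<i. deriv (F (\<theta> + real j * \<omega>)) (Fiter \<omega> F j \<theta> x))"
  using Fiter_deriv DERIV_imp_deriv by blast

lemma frac_shift_int: "frac (x + of_int k) = frac x"
  by (simp add: frac_def)

lemma Tmap_iter:
  "(Tmap \<omega> F ^^ i) (frac \<theta>, frac y) = (frac (\<theta> + real i * \<omega>), frac (Fiter \<omega> F i \<theta> y))"
proof (induction i)
  case 0 then show ?case by simp
next
  case (Suc i)
  have e1: "frac (frac (\<theta> + real i * \<omega>) + \<omega>) = frac (\<theta> + real (Suc i) * \<omega>)"
    by (simp add: algebra_simps) 
  have e2: "frac (F (frac a) (frac z)) = frac (F a z)" for a z
  proof -
    have "F (frac a) (frac z) = F (a + of_int (- floor a)) (z + of_int (- floor z))" by (simp add: frac_def)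
    also have "\<dots> = F a z + of_int (- floor z)" by (simp only: per shift)
    finally show ?thesis by (simp only: frac_shift_int)
  qed
  have "(Tmap \<omega> F ^^ Suc i) (frac \<theta>, frac y) = Tmap \<omega> F (frac (\<theta> + real i * \<omega>), frac (Fiter \<omega> F i \<theta> y))"
    using Suc by simp
  also have "\<dots> = (frac (\<theta> + real (Suc i) * \<omega>), frac (F (\<theta> + real i * \<omega>) (Fiter \<omega> F i \<theta> y)))"
    unfolding Tmap_def fst_conv snd_conv e1 e2 ..
  finally show ?case by simp
qed

end


definition psum :: "(real \<Rightarrow> real) \<Rightarrow> nat \<Rightarrow> (nat \<Rightarrow> real) \<Rightarrow> real" where
  "psum g N xs = (\<Sum>i\<in>{1..N}. \<bar>g (xs i) - g (xs (i - 1))\<bar>)"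

lemma part_interval:
  fixes g :: "real \<Rightarrow> real" and a b :: "'j \<Rightarrow> real"
  assumes "finite J" "\<forall>j\<in>J. c \<le> a j \<and> a j \<le> b j \<and> b j \<le> d"
    "\<forall>j\<in>J. \<forall>j'\<in>J. j \<noteq> j' \<longrightarrow> b j < a j' \<or> b j' < a j" "c \<le> d"
  shows "\<exists>N xs. (\<forall>i<N. xs i \<le> xs (Suc i)) \<and> xs 0 = c \<and> xs N = d \<and>
     (\<Sum>j\<in>J. \<bar>g (b j) - g (a j)\<bar>) \<le> psum g N xs"
  using assms
proof (induction "card J" arbitrary: J c)
  case 0
  then have "J = {}" by simp
  show ?case
    by (rule exI[of _ 1], rule exI[of _ "\<lambda>i. if i = 0 then c else d"]) (use 0 \<open>J = {}\<close> in \<open>auto simp: psum_def\<close>)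
next
  case (Suc m)
  then have "J \<noteq> {}" by auto
  have "Min (a ` J) \<in> a ` J" using Suc.prems(1) \<open>J \<noteq> {}\<close> by (intro Min_in) auto
  then obtain j0 where j0a: "j0 \<in> J" "a j0 = Min (a ` J)" by auto
  have j0: "j0 \<in> J" "\<forall>j\<in>J. a j0 \<le> a j"
    using j0a Suc.prems(1) by auto
  have above: "\<forall>j\<in>J - {j0}. b j0 < a j"
  proof
    fix j assume j: "j \<in> J - {j0}"
    then have "b j < a j0 \<or> b j0 < a j" using Suc.prems(3) j0(1) by auto
    moreover have "a j0 \<le> a j" "a j \<le> b j" using j j0 Suc.prems(2) by auto
    ultimately show "b j0 < a j" by linarith
  qed
  have "m = card (J - {j0})" using Suc.hyps(2) j0(1) by simp
  moreover have "finite (J - {j0})" using Suc.prems(1) by simp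
  moreover have "\<forall>j\<in>J - {j0}. b j0 \<le> a j \<and> a j \<le> b j \<and> b j \<le> d"
    using above Suc.prems(2) by force
  moreover have "\<forall>j\<in>J - {j0}. \<forall>j'\<in>J - {j0}. j \<noteq> j' \<longrightarrow> b j < a j' \<or> b j' < a j"
    using Suc.prems(3) by blast
  moreover have "b j0 \<le> d" using Suc.prems(2) j0(1) by blast
  ultimately obtain N ys where ys: "\<forall>i<N. ys i \<le> ys (Suc i)" "ys 0 = b j0" "ys N = d"
     "(\<Sum>j\<in>J - {j0}. \<bar>g (b j) - g (a j)\<bar>) \<le> psum g N ys"
    using Suc.hyps(1) by blast
  define xs where "xs = (\<lambda>i. if i = 0 then c else if i = 1 then a j0 else ys (i - 2))"
  have p1: "c \<le> a j0" "a j0 \<le> b j0" using Suc.prems(2) j0(1) by auto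
  have mono: "\<forall>i<N+2. xs i \<le> xs (Suc i)"
  proof (intro allI impI)
    fix i assume "i < N + 2"
    then show "xs i \<le> xs (Suc i)"
    proof (cases "i \<ge> 2")
      case True
      then obtain k where k: "i = k + 2" by (metis le_add_diff_inverse2)
      then show ?thesis using ys(1) \<open>i < N + 2\<close> by (simp add: xs_def)
    next
      case False
      then show ?thesis using p1 ys(2) by (cases "i = 0") (auto simp: xs_def)
    qed
  qed
  have "psum g (N+2) xs = \<bar>g (xs 1) - g (xs 0)\<bar> + \<bar>g (xs 2) - g (xs 1)\<bar> + (\<Sum>i\<in>{3..N+2}. \<bar>g (xs i) - g (xs (i - 1))\<bar>)"
  proof -
    have "{1..N+2} = {1, 2} \<union> {3..N+2}" by auto
    then show ?thesis unfolding psum_def by (simp add: sum.union_disjoint)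
  qed
  also have "(\<Sum>i\<in>{3..N+2}. \<bar>g (xs i) - g (xs (i - 1))\<bar>) = psum g N ys"
  proof -
    have e3: "(1::nat) + 2 = 3" by simp
    have "(\<Sum>i\<in>{3..N+2}. \<bar>g (xs i) - g (xs (i - 1))\<bar>) = (\<Sum>i\<in>{1+2..N+2}. \<bar>g (xs i) - g (xs (i - 1))\<bar>)"
      unfolding e3 ..
    also have "\<dots> = (\<Sum>i\<in>{1..N}. \<bar>g (xs (i+2)) - g (xs (i + 2 - 1))\<bar>)"
      by (rule sum.shift_bounds_cl_nat_ivl)
    also have "\<dots> = psum g N ys" unfolding psum_def
      by (rule sum.cong) (auto simp: xs_def)
    finally show ?thesis .
  qed
  finally have ps: "psum g (N+2) xs = \<bar>g (a j0) - g c\<bar> + \<bar>g (b j0) - g (a j0)\<bar> + psum g N ys"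
    by (simp add: xs_def ys(2))
  have "(\<Sum>j\<in>J. \<bar>g (b j) - g (a j)\<bar>) = \<bar>g (b j0) - g (a j0)\<bar> + (\<Sum>j\<in>J - {j0}. \<bar>g (b j) - g (a j)\<bar>)"
    using Suc.prems(1) j0(1) by (simp add: sum.remove)
  also have "\<dots> \<le> psum g (N+2) xs" using ps ys(4) by simp
  finally show ?case using mono ys(3) by (intro exI[of _ "N+2"] exI[of _ xs]) (auto simp: xs_def)
qed

lemma per_int:
  fixes g :: "real \<Rightarrow> real"
  assumes "\<forall>x. g (x + 1) = g x"
  shows "g (x + of_int k) = g x"
proof (induction k rule: int_induct[where k=0])
  case base then show ?case by simp
next
  case (step1 i) then show ?case using assms[rule_format, of "x + of_int i"] by (simp add: add.assoc)
next
  case (step2 i) then show ?case using assms[rule_format, of "x + of_int (i - 1)"] by (simp add: algebra_simps)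
qed

lemma part_circle:
  fixes g :: "real \<Rightarrow> real" and a b :: "'j \<Rightarrow> real"
  assumes per: "\<forall>x. g (x + 1) = g x" and fin: "finite J"
    and ab: "\<forall>j\<in>J. a j \<le> b j \<and> b j < a j + 1"
    and disj: "\<forall>j\<in>J. \<forall>j'\<in>J. j \<noteq> j' \<longrightarrow>
        (\<forall>x x'. a j \<le> x \<longrightarrow> x \<le> b j \<longrightarrow> a j' \<le> x' \<longrightarrow> x' \<le> b j' \<longrightarrow> frac x \<noteq> frac x')"
  shows "\<exists>N xs. (\<forall>i<N. xs i \<le> xs (Suc i)) \<and> xs N = xs 0 + 1 \<and>
     (\<Sum>j\<in>J. \<bar>g (b j) - g (a j)\<bar>) \<le> psum g N xs"
proof (cases "J = {}")
  case True
  show ?thesis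
    by (rule exI[of _ 1], rule exI[of _ "\<lambda>i. real i"]) (use True in \<open>auto simp: psum_def\<close>)
next
  case False
  then obtain j0 where j0: "j0 \<in> J" by auto
  define c where "c = a j0"
  define k where "k j = - floor (a j - c)" for j
  define a' where "a' j = a j + of_int (k j)" for j
  define b' where "b' j = b j + of_int (k j)" for j
  have fr: "frac (x + of_int m) = frac x" for x m by (simp add: frac_def)
  have a'c: "c \<le> a' j \<and> a' j < c + 1" for j
    unfolding a'_def k_def by (simp; linarith)
  have k0: "k j0 = 0" by (simp add: k_def c_def)
  have b'le: "b' j \<le> c + 1" if j: "j \<in> J" for j
  proof (cases "j = j0")
    case True then show ?thesis using ab j0 k0 by (force simp add: b'_def c_def)
  next
    case False
    show ?thesis
    proof (rule ccontr)
      assume "\<not> b' j \<le> c + 1"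
      then have "a j \<le> c + 1 - of_int (k j)" "c + 1 - of_int (k j) \<le> b j"
        using a'c[of j] unfolding a'_def b'_def by auto
      moreover have "frac (c + 1 - of_int (k j)) = frac (a j0)"
        using fr[of "c" "1 - k j"] by (simp add: c_def algebra_simps)
      ultimately show False using disj j j0 False ab by (metis order_refl)
    qed
  qed
  have disj': "b' j < a' j' \<or> b' j' < a' j" if "j \<in> J" "j' \<in> J" "j \<noteq> j'" for j j'
  proof (rule ccontr)
    assume H: "\<not> (b' j < a' j' \<or> b' j' < a' j)"
    define x where "x = max (a' j) (a' j')"
    have "a j \<le> x - of_int (k j)" "x - of_int (k j) \<le> b j" "a j' \<le> x - of_int (k j')" "x - of_int (k j') \<le> b j'"
      using H ab that unfolding x_def a'_def b'_def by auto
    moreover have "frac (x - of_int (k j)) = frac (x - of_int (k j'))"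
      using fr[of x "- k j"] fr[of x "- k j'"] by simp
    ultimately show False using disj that by blast
  qed
  have "\<exists>N xs. (\<forall>i<N. xs i \<le> xs (Suc i)) \<and> xs 0 = c \<and> xs N = c + 1 \<and>
     (\<Sum>j\<in>J. \<bar>g (b' j) - g (a' j)\<bar>) \<le> psum g N xs"
    by (rule part_interval) (use fin a'c b'le disj' ab in \<open>auto simp: a'_def b'_def\<close>)
  moreover have "(\<Sum>j\<in>J. \<bar>g (b' j) - g (a' j)\<bar>) = (\<Sum>j\<in>J. \<bar>g (b j) - g (a j)\<bar>)"
    unfolding a'_def b'_def using per_int[OF per] by simp
  ultimately show ?thesis by auto
qed

lemma fibre_var_ge:
  assumes "\<forall>i<N. xs i \<le> xs (Suc i)" "xs N = xs 0 + 1"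
  shows "ennreal (psum (\<lambda>x. ln (deriv (F \<theta>) x)) N xs) \<le> fibre_var F \<theta>"
  unfolding fibre_var_def psum_def
  by (rule SUP_upper2[of "(N, xs)"]) (use assms in auto)



context qpf
begin

definition L :: "real \<Rightarrow> real \<Rightarrow> real" where "L t x = ln (deriv (F t) x)"

lemma L_cont: "continuous_on UNIV (\<lambda>p. L (fst p) (snd p))"
  unfolding L_def by (intro continuous_on_ln dcont) (use dpos in \<open>auto simp: less_le\<close>)

lemma L_per: "L (t + of_int k) x = L t x" unfolding L_def by (simp only: per)
lemma L_shift: "L t (x + of_int k) = L t x" unfolding L_def by (simp only: deriv_shift)
lemma L_per1: "L (t + 1) x = L t x" using L_per[of t 1 x] by simp
lemma L_shift1: "L t (x + 1) = L t x" using L_shift[of t x 1] by simp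

lemma L_bounded: "\<exists>M. \<forall>t x. \<bar>L t x\<bar> \<le> M"
proof -
  have "compact ((\<lambda>p. L (fst p) (snd p)) ` ({0..1} \<times> {0..1}))"
    by (intro compact_continuous_image continuous_on_subset[OF L_cont] compact_Times) auto
  then obtain M where M: "\<forall>y\<in>(\<lambda>p. L (fst p) (snd p)) ` ({0..1} \<times> {0..1}). norm y \<le> M"
    using compact_imp_bounded bounded_iff by metis
  have "\<bar>L t x\<bar> \<le> M" for t x
  proof -
    have "L t x = L (frac t + of_int (floor t)) (frac x + of_int (floor x))"
      by (simp add: frac_def)
    also have "\<dots> = L (frac t) (frac x)" by (simp only: L_per L_shift)
    moreover have "(frac t, frac x) \<in> {0..1} \<times> {0..1}"
      using frac_ge_0 frac_lt_1[of t] frac_lt_1[of x] by (auto simp: less_eq_real_def)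
    ultimately show ?thesis using M by force
  qed
  then show ?thesis by blast
qed

lemma h_cont: "continuous_on UNIV (\<lambda>p. L (fst p + real i * \<omega>) (Fiter \<omega> F i (fst p) (snd p)))"
proof -
  have eq: "(\<lambda>p. L (fst p + real i * \<omega>) (Fiter \<omega> F i (fst p) (snd p))) = (\<lambda>p. L (fst p) (snd p)) \<circ> (\<lambda>p. (fst p + real i * \<omega>, Fiter \<omega> F i (fst p) (snd p)))"
    by auto
  have c2: "continuous_on UNIV (\<lambda>p::real\<times>real. (fst p + real i * \<omega>, Fiter \<omega> F i (fst p) (snd p)))"
    by (intro continuous_intros Fiter_cont)
  show ?thesis unfolding eq by (rule continuous_on_compose[OF c2 continuous_on_subset[OF L_cont subset_UNIV]])
qed

lemma h_meas: assumes "f \<in> borel_measurable borel"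
  shows "(\<lambda>\<theta>. L (\<theta> + real i * \<omega>) (Fiter \<omega> F i \<theta> (f \<theta>))) \<in> borel_measurable borel"
proof -
  have "(\<lambda>\<theta>. (\<theta>, f \<theta>)) \<in> borel_measurable borel" using assms by measurable
  from borel_measurable_continuous_on[OF h_cont this] show ?thesis by simp
qed

lemma deriv_ratio:
  "(deriv (Fiter \<omega> F n \<theta>) y / deriv (Fiter \<omega> F n \<theta>) x) powr s =
   exp (s * (\<Sum>i<n. L (\<theta> + real i * \<omega>) (Fiter \<omega> F i \<theta> y) - L (\<theta> + real i * \<omega>) (Fiter \<omega> F i \<theta> x)))"
proof -
  have pos: "0 < deriv (F a) b" for a b by (rule dpos)
  have nz: "deriv (F a) b \<noteq> 0" for a b using dpos[of a b] by linarith
  have py: "deriv (Fiter \<omega> F n \<theta>) y > 0" and px: "deriv (Fiter \<omega> F n \<theta>) x > 0"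
    unfolding Fiter_deriv_eq by (auto intro!: prod_pos pos)
  have "ln (deriv (Fiter \<omega> F n \<theta>) y / deriv (Fiter \<omega> F n \<theta>) x) =
     (\<Sum>i<n. L (\<theta> + real i * \<omega>) (Fiter \<omega> F i \<theta> y)) - (\<Sum>i<n. L (\<theta> + real i * \<omega>) (Fiter \<omega> F i \<theta> x))"
    using py px unfolding Fiter_deriv_eq L_def by (simp add: ln_div ln_prod nz)
  then show ?thesis using py px by (simp add: powr_def sum_subtractf)
qed

end


locale setting = qpf +
  fixes I :: "real set" and n :: nat and \<phi> \<psi> :: "real \<Rightarrow> real"
  assumes injI: "inj_on frac I"
    and disjT: "\<forall>i<n. \<forall>j<n. i \<noteq> j \<longrightarrow>
           (Tmap \<omega> F ^^ i) ` band I \<phi> \<psi> \<inter> (Tmap \<omega> F ^^ j) ` band I \<phi> \<psi> = {}"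
begin

lemma Fiter_le: "x \<le> y \<Longrightarrow> Fiter \<omega> F i \<theta> x \<le> Fiter \<omega> F i \<theta> y"
  using Fiter_mono[of x y i \<theta>] by (cases "x = y") auto

definition u :: "nat \<Rightarrow> real \<Rightarrow> real" where
  "u i \<theta> = L (\<theta> + real i * \<omega>) (Fiter \<omega> F i \<theta> (\<psi> \<theta>)) - L (\<theta> + real i * \<omega>) (Fiter \<omega> F i \<theta> (\<phi> \<theta>))"

lemma in_image:
  assumes th: "th \<in> I" and i: "th + real i * \<omega> = t + of_int k" and t: "0 \<le> t" "t < 1"
    and z: "Fiter \<omega> F i th (\<phi> th) \<le> z" "z \<le> Fiter \<omega> F i th (\<phi> th + frac (\<psi> th - \<phi> th))"
  shows "(t, frac z) \<in> (Tmap \<omega> F ^^ i) ` band I \<phi> \<psi>"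
proof -
  have "\<forall>x. \<phi> th \<le> x \<and> x \<le> \<phi> th + frac (\<psi> th - \<phi> th) \<longrightarrow> isCont (Fiter \<omega> F i th) x"
    using Fiter_cont1 continuous_on_eq_continuous_at open_UNIV by blast
  then obtain y where y: "\<phi> th \<le> y" "y \<le> \<phi> th + frac (\<psi> th - \<phi> th)" "Fiter \<omega> F i th y = z"
    using IVT[of "Fiter \<omega> F i th" "\<phi> th" z "\<phi> th + frac (\<psi> th - \<phi> th)"] z by auto
  have "frac y \<in> circ_arc (\<phi> th) (\<psi> th)"
    unfolding circ_arc_def using y by (intro CollectI exI[of _ "y - \<phi> th"]) auto
  then have "(frac th, frac y) \<in> band I \<phi> \<psi>"
    unfolding band_def using th by blast
  moreover have "(Tmap \<omega> F ^^ i) (frac th, frac y) = (t, frac z)"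
    unfolding Tmap_iter i y(3) using t by (simp add: frac_shift_int)
  ultimately show ?thesis by force
qed

lemma pointwise:
  assumes t: "0 \<le> t" "t < 1" and finK: "finite K"
  shows "ennreal (\<Sum>p\<in>{..<n} \<times> K. indicator I (t + of_int (snd p) - real (fst p) * \<omega>) *
            \<bar>u (fst p) (t + of_int (snd p) - real (fst p) * \<omega>)\<bar>) \<le> fibre_var F t"
proof -
  define th where "th p = t + of_int (snd p) - real (fst p) * \<omega>" for p :: "nat \<times> int"
  define J where "J = {p \<in> {..<n} \<times> K. th p \<in> I}"
  define a where "a p = Fiter \<omega> F (fst p) (th p) (\<phi> (th p))" for p
  define b where "b p = Fiter \<omega> F (fst p) (th p) (\<phi> (th p) + frac (\<psi> (th p) - \<phi> (th p)))" for p
  have finJ: "finite J" unfolding J_def using finK by simp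
  have sumJ: "(\<Sum>p\<in>{..<n} \<times> K. indicator I (th p) * \<bar>u (fst p) (th p)\<bar>) = (\<Sum>p\<in>J. \<bar>u (fst p) (th p)\<bar>)"
  proof -
    have "(\<Sum>p\<in>{..<n} \<times> K. indicator I (th p) * \<bar>u (fst p) (th p)\<bar>) =
       (\<Sum>p\<in>{..<n} \<times> K. if th p \<in> I then \<bar>u (fst p) (th p)\<bar> else 0)"
      by (intro sum.cong) (auto simp: indicator_def)
    also have "\<dots> = (\<Sum>p\<in>J. \<bar>u (fst p) (th p)\<bar>)"
      unfolding J_def by (rule sum.inter_filter[symmetric]) (use finK in simp)
    finally show ?thesis .
  qed
  have ueq: "\<bar>u (fst p) (th p)\<bar> = \<bar>L t (b p) - L t (a p)\<bar>" for p
  proof -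
    have e1: "th p + real (fst p) * \<omega> = t + of_int (snd p)" by (simp add: th_def)
    have e2: "\<psi> (th p) = (\<phi> (th p) + frac (\<psi> (th p) - \<phi> (th p))) + of_int (floor (\<psi> (th p) - \<phi> (th p)))"
      by (simp add: frac_def)
    show ?thesis unfolding u_def a_def b_def e1 L_per
      by (subst e2, simp only: Fiter_shift L_shift)
  qed
  have ab: "\<forall>p\<in>J. a p \<le> b p \<and> b p < a p + 1"
  proof
    fix p assume "p \<in> J"
    have "a p \<le> b p" unfolding a_def b_def
      by (rule Fiter_le) simp
    moreover have "b p < a p + 1"
      using Fiter_mono[of "\<phi> (th p) + frac (\<psi> (th p) - \<phi> (th p))" "\<phi> (th p) + of_int 1" "fst p" "th p"]
        frac_lt_1[of "\<psi> (th p) - \<phi> (th p)"]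
      unfolding a_def b_def Fiter_shift by simp
    ultimately show "a p \<le> b p \<and> b p < a p + 1" ..
  qed
  have img: "(t, frac z) \<in> (Tmap \<omega> F ^^ fst p) ` band I \<phi> \<psi>" if "p \<in> J" "a p \<le> z" "z \<le> b p" for p z
    by (rule in_image[of "th p" "fst p" t "snd p"]) (use that t in \<open>auto simp: J_def th_def a_def b_def\<close>)
  have disj: "\<forall>j\<in>J. \<forall>j'\<in>J. j \<noteq> j' \<longrightarrow>
        (\<forall>x x'. a j \<le> x \<longrightarrow> x \<le> b j \<longrightarrow> a j' \<le> x' \<longrightarrow> x' \<le> b j' \<longrightarrow> frac x \<noteq> frac x')"
  proof (intro ballI impI allI notI)
    fix p p' x x' assume p: "p \<in> J" "p' \<in> J" "p \<noteq> p'" and x: "a p \<le> x" "x \<le> b p" "a p' \<le> x'" "x' \<le> b p'"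
      and fx: "frac x = frac x'"
    have "fst p \<noteq> fst p'"
    proof
      assume e: "fst p = fst p'"
      have "th p = th p' + of_int (snd p - snd p')" using e by (simp add: th_def)
      then have "frac (th p) = frac (th p')" by (simp only: frac_shift_int)
      then have "th p = th p'" using injI p(1,2) unfolding J_def inj_on_def by blast
      then have "snd p = snd p'" using e by (simp add: th_def)
      then show False using e p(3) by (simp add: prod_eq_iff)
    qed
    moreover have "fst p < n" "fst p' < n" using p unfolding J_def by auto
    moreover have "(t, frac x) \<in> (Tmap \<omega> F ^^ fst p) ` band I \<phi> \<psi>" using img p x by blast
    moreover have "(t, frac x) \<in> (Tmap \<omega> F ^^ fst p') ` band I \<phi> \<psi>" using img[of p' x'] p x fx by simp
    ultimately show False using disjT by blast
  qed
  obtain N xs where N: "\<forall>i<N. xs i \<le> xs (Suc i)" "xs N = xs 0 + 1"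
     "(\<Sum>j\<in>J. \<bar>L t (b j) - L t (a j)\<bar>) \<le> psum (L t) N xs"
    using part_circle[of "L t" J a b] L_shift1 finJ ab disj by blast
  have "psum (L t) N xs = psum (\<lambda>x. ln (deriv (F t) x)) N xs"
    by (simp add: L_def psum_def)
  then have "ennreal (psum (L t) N xs) \<le> fibre_var F t" using fibre_var_ge[OF N(1,2)] by simp
  moreover have "(\<Sum>p\<in>{..<n} \<times> K. indicator I (th p) * \<bar>u (fst p) (th p)\<bar>) \<le> psum (L t) N xs"
    using N(3) sumJ ueq by simp
  ultimately show ?thesis unfolding th_def by (meson ennreal_leI order_trans)
qed

end


locale setting2 = setting +
  assumes om: "0 \<le> \<omega>" "\<omega> < 1"
    and Iint: "is_interval I" and Ibdd: "bounded I"
    and phim: "\<phi> \<in> borel_measurable borel" and psim: "\<psi> \<in> borel_measurable borel"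
begin

lemma I_sets[measurable]: "I \<in> sets borel"
  by (rule real_interval_borel_measurable[OF Iint])

lemma u_meas[measurable]: "u i \<in> borel_measurable borel"
  unfolding u_def using h_meas[OF psim, of i] h_meas[OF phim, of i] by measurable

definition K :: "int set" where
  "K = {- (ceiling (SOME B. \<forall>x\<in>I. \<bar>x\<bar> \<le> B) + int n + 1) .. ceiling (SOME B. \<forall>x\<in>I. \<bar>x\<bar> \<le> B) + int n + 1}"

lemma finK: "finite K" unfolding K_def by simp

lemma floor_in_K:
  assumes "x \<in> I" "i < n" shows "floor (x + real i * \<omega>) \<in> K"
proof -
  have "\<exists>B. \<forall>x\<in>I. \<bar>x\<bar> \<le> B" using Ibdd unfolding bounded_iff by auto
  then have B: "\<forall>x\<in>I. \<bar>x\<bar> \<le> (SOME B. \<forall>x\<in>I. \<bar>x\<bar> \<le> B)" by (rule someI_ex)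
  define C where "C = (SOME B. \<forall>x\<in>I. \<bar>x\<bar> \<le> B)"
  have xb: "\<bar>x\<bar> \<le> C" using B assms(1) unfolding C_def by blast
  have "0 \<le> real i * \<omega>" using om by simp
  moreover have "real i * \<omega> \<le> real n" using om assms(2)
    by (metis less_eq_real_def mult_left_le mult_nonneg_nonneg of_nat_0_le_iff of_nat_less_iff order_trans)
  moreover have "C \<le> of_int (ceiling C)" by (rule le_of_int_ceiling)
  ultimately show ?thesis unfolding K_def C_def[symmetric] using xb
    by (simp; linarith)
qed

lemma translate:
  assumes "i < n"
  shows "(\<integral>\<^sup>+\<theta>. ennreal (indicator I \<theta> * \<bar>u i \<theta>\<bar>) \<partial>lborel) =
    (\<Sum>k\<in>K. \<integral>\<^sup>+t. ennreal (indicator {0..<1} t * (indicator I (t + of_int k - real i * \<omega>) *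
         \<bar>u i (t + of_int k - real i * \<omega>)\<bar>)) \<partial>lborel)"
proof -
  define g where "g \<theta> = indicator I \<theta> * \<bar>u i \<theta>\<bar>" for \<theta>
  have gm[measurable]: "g \<in> borel_measurable borel" unfolding g_def by measurable
  have step: "(\<integral>\<^sup>+t. ennreal (indicator {0..<1} t * g (t + of_int k - real i * \<omega>)) \<partial>lborel) =
     (\<integral>\<^sup>+x. ennreal (indicator {0..<1} (x - of_int k + real i * \<omega>) * g x) \<partial>lborel)" for k
  proof -
    have "(\<integral>\<^sup>+x. ennreal (indicator {0..<1} (x - of_int k + real i * \<omega>) * g x) \<partial>lborel) =
      ennreal \<bar>1::real\<bar> * (\<integral>\<^sup>+x. ennreal (indicator {0..<1} ((of_int k - real i * \<omega> + 1 * x) - of_int k + real i * \<omega>) *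
         g (of_int k - real i * \<omega> + 1 * x)) \<partial>lborel)"
      by (rule nn_integral_real_affine) auto
    also have "\<dots> = (\<integral>\<^sup>+t. ennreal (indicator {0..<1} t * g (t + of_int k - real i * \<omega>)) \<partial>lborel)"
      by (simp add: algebra_simps)
    finally show ?thesis by simp
  qed
  have pw: "(\<Sum>k\<in>K. ennreal (indicator {0..<1} (x - of_int k + real i * \<omega>) * g x)) = ennreal (g x)" for x
  proof (cases "x \<in> I")
    case False then show ?thesis by (simp add: g_def)
  next
    case True
    define k0 where "k0 = floor (x + real i * \<omega>)"
    have k0K: "k0 \<in> K" unfolding k0_def using floor_in_K[OF True assms] .
    have ind: "indicator {0..<1} (x - of_int k + real i * \<omega>) = (if k = k0 then 1 else (0::real))" for k
    proof -
      have "(x - of_int k + real i * \<omega> \<in> {0..<1}) = (k0 = k)"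
        unfolding k0_def floor_eq_iff by auto
      then show ?thesis by (auto simp: indicator_def)
    qed
    have "(\<Sum>k\<in>K. ennreal (indicator {0..<1} (x - of_int k + real i * \<omega>) * g x)) =
       (\<Sum>k\<in>K. if k = k0 then ennreal (g x) else 0)"
      by (intro sum.cong) (auto simp: ind)
    also have "\<dots> = ennreal (g x)" using finK k0K by simp
    finally show ?thesis .
  qed
  have "(\<Sum>k\<in>K. \<integral>\<^sup>+t. ennreal (indicator {0..<1} t * g (t + of_int k - real i * \<omega>)) \<partial>lborel) =
     (\<Sum>k\<in>K. \<integral>\<^sup>+x. ennreal (indicator {0..<1} (x - of_int k + real i * \<omega>) * g x) \<partial>lborel)"
    using step by simp
  also have "\<dots> = (\<integral>\<^sup>+x. (\<Sum>k\<in>K. ennreal (indicator {0..<1} (x - of_int k + real i * \<omega>) * g x)) \<partial>lborel)"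
    by (rule nn_integral_sum[symmetric]) measurable
  also have "\<dots> = (\<integral>\<^sup>+x. ennreal (g x) \<partial>lborel)" using pw by simp
  finally show ?thesis unfolding g_def by simp
qed

lemma G_bound:
  "(\<integral>\<^sup>+\<theta>. ennreal (indicator I \<theta> * (\<Sum>i<n. \<bar>u i \<theta>\<bar>)) \<partial>lborel) \<le> total_var F"
proof -
  define f where "f i k t = ennreal (indicator {0..<1} t * (indicator I (t + of_int k - real i * \<omega>) *
         \<bar>u i (t + of_int k - real i * \<omega>)\<bar>))" for i k t
  have fm[measurable]: "(\<lambda>t. f i k t) \<in> borel_measurable borel" for i k unfolding f_def by measurable
  have "(\<integral>\<^sup>+\<theta>. ennreal (indicator I \<theta> * (\<Sum>i<n. \<bar>u i \<theta>\<bar>)) \<partial>lborel) =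
     (\<integral>\<^sup>+\<theta>. (\<Sum>i<n. ennreal (indicator I \<theta> * \<bar>u i \<theta>\<bar>)) \<partial>lborel)"
    by (simp add: sum_distrib_left)
  also have "\<dots> = (\<Sum>i<n. \<integral>\<^sup>+\<theta>. ennreal (indicator I \<theta> * \<bar>u i \<theta>\<bar>) \<partial>lborel)"
    by (rule nn_integral_sum) measurable
  also have "\<dots> = (\<Sum>i<n. \<Sum>k\<in>K. \<integral>\<^sup>+t. f i k t \<partial>lborel)"
    unfolding f_def by (intro sum.cong refl translate) simp
  also have "\<dots> = (\<integral>\<^sup>+t. (\<Sum>i<n. \<Sum>k\<in>K. f i k t) \<partial>lborel)"
    by (simp add: nn_integral_sum)
  also have "\<dots> \<le> (\<integral>\<^sup>+t. fibre_var F t * indicator {0..<1} t \<partial>lborel)"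
  proof (rule nn_integral_mono)
    fix t
    show "(\<Sum>i<n. \<Sum>k\<in>K. f i k t) \<le> fibre_var F t * indicator {0..<1} t"
    proof (cases "t \<in> {0..<1}")
      case False then show ?thesis by (simp add: f_def)
    next
      case True
      have "(\<Sum>i<n. \<Sum>k\<in>K. f i k t) = ennreal (\<Sum>i<n. \<Sum>k\<in>K. indicator I (t + of_int k - real i * \<omega>) *
         \<bar>u i (t + of_int k - real i * \<omega>)\<bar>)"
        using True by (simp add: f_def sum_nonneg)
      also have "\<dots> = ennreal (\<Sum>p\<in>{..<n} \<times> K. indicator I (t + of_int (snd p) - real (fst p) * \<omega>) *
            \<bar>u (fst p) (t + of_int (snd p) - real (fst p) * \<omega>)\<bar>)"
        by (simp add: sum.cartesian_product case_prod_beta)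
      also have "\<dots> \<le> fibre_var F t" using pointwise[of t K] True finK by simp
      finally show ?thesis using True by simp
    qed
  qed
  also have "\<dots> = total_var F" unfolding total_var_def ..
  finally show ?thesis .
qed

end


context setting2
begin

lemma bint:
  fixes f :: "real \<Rightarrow> real" and C :: real
  assumes [measurable]: "f \<in> borel_measurable borel" and b: "\<And>x. \<bar>f x\<bar> \<le> C"
  shows "set_integrable lborel I f"
  unfolding set_integrable_def
proof (rule integrableI_bounded_set[where A=I and B=C])
  show "I \<in> sets lborel" by simp
  show "(\<lambda>x. indicator I x *\<^sub>R f x) \<in> borel_measurable lborel" by measurable
  show "emeasure lborel I < \<infinity>" using emeasure_bounded_finite[OF Ibdd] .
  show "AE x in lborel. x \<notin> I \<longrightarrow> indicator I x *\<^sub>R f x = 0" by simp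
  show "AE x in lborel. x \<in> I \<longrightarrow> norm (indicator I x *\<^sub>R f x) \<le> C" using b by simp
qed

theorem core:
  assumes s: "s > 0" and V: "total_var F < \<infinity>"
  shows "(LINT \<theta>:I|lborel.
            (deriv (Fiter \<omega> F n \<theta>) (\<psi> \<theta>) / deriv (Fiter \<omega> F n \<theta>) (\<phi> \<theta>)) powr s)
         \<ge> measure lborel I * exp (- s * enn2real (total_var F) / measure lborel I)"
proof -
  obtain M where M: "\<And>t x. \<bar>L t x\<bar> \<le> M" using L_bounded by blast
  have ub: "\<bar>u i \<theta>\<bar> \<le> 2 * M" for i \<theta> unfolding u_def
    using M[of "\<theta> + real i * \<omega>" "Fiter \<omega> F i \<theta> (\<psi> \<theta>)"] M[of "\<theta> + real i * \<omega>" "Fiter \<omega> F i \<theta> (\<phi> \<theta>)"]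
    by arith
  define R where "R \<theta> = (\<Sum>i<n. u i \<theta>)" for \<theta>
  define G where "G \<theta> = (\<Sum>i<n. \<bar>u i \<theta>\<bar>)" for \<theta>
  have Rm[measurable]: "R \<in> borel_measurable borel" unfolding R_def by measurable
  have Gm[measurable]: "G \<in> borel_measurable borel" unfolding G_def by measurable
  have Rb: "\<bar>R \<theta>\<bar> \<le> real n * (2 * M)" for \<theta>
  proof -
    have "\<bar>R \<theta>\<bar> \<le> (\<Sum>i<n. \<bar>u i \<theta>\<bar>)" unfolding R_def by (rule sum_abs)
    also have "\<dots> \<le> (\<Sum>i<n. 2 * M)" by (intro sum_mono ub)
    finally show ?thesis by simp
  qed
  have Gb: "\<bar>G \<theta>\<bar> \<le> real n * (2 * M)" for \<theta>
  proof -
    have "\<bar>G \<theta>\<bar> = (\<Sum>i<n. \<bar>u i \<theta>\<bar>)" unfolding G_def by (simp add: sum_nonneg)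
    also have "\<dots> \<le> (\<Sum>i<n. 2 * M)" by (intro sum_mono ub)
    finally show ?thesis by simp
  qed
  have RG: "- G \<theta> \<le> R \<theta>" for \<theta>
  proof -
    have "- G \<theta> = (\<Sum>i<n. - \<bar>u i \<theta>\<bar>)" unfolding G_def by (simp add: sum_negf)
    also have "\<dots> \<le> R \<theta>" unfolding R_def by (intro sum_mono) simp
    finally show ?thesis .
  qed
  have eq: "(deriv (Fiter \<omega> F n \<theta>) (\<psi> \<theta>) / deriv (Fiter \<omega> F n \<theta>) (\<phi> \<theta>)) powr s = exp (s * R \<theta>)" for \<theta>
    unfolding R_def u_def by (rule deriv_ratio)
  have iR: "set_integrable lborel I R" by (rule bint[OF Rm Rb])
  have iG: "set_integrable lborel I G" by (rule bint[OF Gm Gb])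
  have iE: "set_integrable lborel I (\<lambda>\<theta>. exp (s * R \<theta>))"
  proof (rule bint)
    show "(\<lambda>\<theta>. exp (s * R \<theta>)) \<in> borel_measurable borel" by measurable
    show "\<bar>exp (s * R \<theta>)\<bar> \<le> exp (s * (real n * (2 * M)))" for \<theta>
      using Rb[of \<theta>] s by (simp add: abs_le_iff mult_left_mono)
  qed
  have i1: "set_integrable lborel I (\<lambda>\<theta>. 1::real)" by (rule bint) auto
  define V where "V = enn2real (total_var F)"
  define m where "m = measure lborel I"
  have m0: "m \<ge> 0" unfolding m_def by simp
  have LHS: "(LINT \<theta>:I|lborel. (deriv (Fiter \<omega> F n \<theta>) (\<psi> \<theta>) / deriv (Fiter \<omega> F n \<theta>) (\<phi> \<theta>)) powr s)
     = (LINT \<theta>:I|lborel. exp (s * R \<theta>))" unfolding eq ..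
  have GV: "(LINT \<theta>:I|lborel. G \<theta>) \<le> V"
  proof -
    have int: "integrable lborel (\<lambda>\<theta>. indicator I \<theta> * G \<theta>)" using iG unfolding set_integrable_def by simp
    have "ennreal (LINT \<theta>:I|lborel. G \<theta>) = (\<integral>\<^sup>+\<theta>. ennreal (indicator I \<theta> * G \<theta>) \<partial>lborel)"
      unfolding set_lebesgue_integral_def
      by (subst nn_integral_eq_integral[OF int]) (auto simp: G_def sum_nonneg)
    also have "\<dots> \<le> total_var F" using G_bound unfolding G_def .
    finally have le: "ennreal (LINT \<theta>:I|lborel. G \<theta>) \<le> total_var F" .
    have nn: "0 \<le> (LINT \<theta>:I|lborel. G \<theta>)" unfolding set_lebesgue_integral_def
      by (rule integral_nonneg_AE) (auto simp: G_def sum_nonneg)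
    show ?thesis unfolding V_def using enn2real_mono[OF le] V nn by simp
  qed
  show ?thesis
  proof (cases "m = 0")
    case True
    have "0 \<le> (LINT \<theta>:I|lborel. exp (s * R \<theta>))" unfolding set_lebesgue_integral_def
      by (rule integral_nonneg_AE) auto
    then show ?thesis using True LHS unfolding m_def by simp
  next
    case False
    then have mpos: "m > 0" using m0 by simp
    define c where "c = - s * V / m"
    have pw: "exp c * (1 + (s * R \<theta> - c)) \<le> exp (s * R \<theta>)" for \<theta>
    proof -
      have "exp c * (1 + (s * R \<theta> - c)) \<le> exp c * exp (s * R \<theta> - c)"
        by (intro mult_left_mono exp_ge_add_one_self) simp
      also have "\<dots> = exp (s * R \<theta>)" by (simp add: exp_diff)
      finally show ?thesis .
    qed
    have fe: "(\<lambda>\<theta>. exp c * (1 + (s * R \<theta> - c))) = (\<lambda>\<theta>. exp c * ((1 - c) * 1 + s * R \<theta>))"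
      by (simp add: algebra_simps)
    have i1c: "set_integrable lborel I (\<lambda>\<theta>. (1 - c) * 1)" by (rule bint[where C="\<bar>1 - c\<bar>"]) auto
    have iRs: "set_integrable lborel I (\<lambda>\<theta>. s * R \<theta>)" using iR by auto
    have iLin: "set_integrable lborel I (\<lambda>\<theta>. exp c * (1 + (s * R \<theta> - c)))"
      unfolding fe by (intro set_integrable_mult_right set_integral_add(1) i1c iRs)
    have "(LINT \<theta>:I|lborel. exp c * (1 + (s * R \<theta> - c))) = exp c * ((1 - c) * m + s * (LINT \<theta>:I|lborel. R \<theta>))"
    proof -
      have "(LINT \<theta>:I|lborel. exp c * (1 + (s * R \<theta> - c))) = exp c * (LINT \<theta>:I|lborel. (1 - c) * 1 + s * R \<theta>)"
        unfolding fe by (rule set_integral_mult_right)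
      also have "(LINT \<theta>:I|lborel. (1 - c) * 1 + s * R \<theta>) = (LINT \<theta>:I|lborel. (1 - c) * 1) + (LINT \<theta>:I|lborel. s * R \<theta>)"
        by (rule set_integral_add(2)[OF i1c iRs])
      also have "(LINT \<theta>:I|lborel. (1 - c) * 1) = (1 - c) * m"
        using set_integral_const[of I lborel "1 - c"] emeasure_bounded_finite[OF Ibdd] unfolding m_def by simp
      finally show ?thesis by simp
    qed
    moreover have "(LINT \<theta>:I|lborel. exp c * (1 + (s * R \<theta> - c))) \<le> (LINT \<theta>:I|lborel. exp (s * R \<theta>))"
      by (rule set_integral_mono[OF iLin iE pw])
    moreover have "- V \<le> (LINT \<theta>:I|lborel. R \<theta>)"
    proof -
      have "(LINT \<theta>:I|lborel. - G \<theta>) \<le> (LINT \<theta>:I|lborel. R \<theta>)"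
      proof (rule set_integral_mono[OF _ iR RG])
        show "set_integrable lborel I (\<lambda>\<theta>. - G \<theta>)"
          by (rule bint[where C="real n * (2 * M)"]) (measurable, use Gb in simp)
      qed
      then show ?thesis using GV set_integral_uminus[OF iG] by simp
    qed
    moreover have "exp c * m \<le> exp c * ((1 - c) * m + s * (LINT \<theta>:I|lborel. R \<theta>))"
    proof -
      have "- c * m = s * V" unfolding c_def using mpos by simp
      moreover have "s * (- V) \<le> s * (LINT \<theta>:I|lborel. R \<theta>)"
        using calculation s \<open>- V \<le> _\<close> by (intro mult_left_mono) auto
      ultimately have "m \<le> (1 - c) * m + s * (LINT \<theta>:I|lborel. R \<theta>)" by (simp add: algebra_simps)
      then show ?thesis by simp
    qed
    ultimately have "exp c * m \<le> (LINT \<theta>:I|lborel. exp (s * R \<theta>))" by linarith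
    then show ?thesis using LHS unfolding c_def m_def V_def by (simp add: mult.commute)
  qed
qed

end


theorem mainTheorem6:
  fixes \<omega> :: real and F :: "real \<Rightarrow> real \<Rightarrow> real" and I :: "real set"
    and n :: nat and \<phi> \<psi> :: "real \<Rightarrow> real" and s :: real
  assumes "0 \<le> \<omega>" "\<omega> < 1" "\<omega> \<notin> \<rat>"
    and "qpf_C1 F" and "total_var F < \<infinity>"
    and "is_interval I" and "bounded I" and "inj_on frac I"
    and "set_borel_measurable lborel I \<phi>" and "set_borel_measurable lborel I \<psi>"
    and "\<forall>i<n. \<forall>j<n. i \<noteq> j \<longrightarrow>
           (Tmap \<omega> F ^^ i) ` band I \<phi> \<psi> \<inter> (Tmap \<omega> F ^^ j) ` band I \<phi> \<psi> = {}"
    and "s > 0"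
  shows "(LINT \<theta>:I|lborel.
            (deriv (Fiter \<omega> F n \<theta>) (\<psi> \<theta>) / deriv (Fiter \<omega> F n \<theta>) (\<phi> \<theta>)) powr s)
         \<ge> measure lborel I * exp (- s * enn2real (total_var F) / measure lborel I)"
proof -
  define \<phi>' where "\<phi>' \<theta> = indicator I \<theta> *\<^sub>R \<phi> \<theta>" for \<theta>
  define \<psi>' where "\<psi>' \<theta> = indicator I \<theta> *\<^sub>R \<psi> \<theta>" for \<theta>
  have pm: "\<phi>' \<in> borel_measurable borel" using assms(9) unfolding set_borel_measurable_def \<phi>'_def by simp
  have qm: "\<psi>' \<in> borel_measurable borel" using assms(10) unfolding set_borel_measurable_def \<psi>'_def by simp
  have on: "\<phi>' \<theta> = \<phi> \<theta>" "\<psi>' \<theta> = \<psi> \<theta>" if "\<theta> \<in> I" for \<theta> using that by (simp_all add: \<phi>'_def \<psi>'_def)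
  have band: "band I \<phi>' \<psi>' = band I \<phi> \<psi>"
    unfolding band_def using on by force
  interpret setting2 \<omega> F I n \<phi>' \<psi>'
    by unfold_locales (use assms pm qm band in auto)
  have "(LINT \<theta>:I|lborel.
            (deriv (Fiter \<omega> F n \<theta>) (\<psi>' \<theta>) / deriv (Fiter \<omega> F n \<theta>) (\<phi>' \<theta>)) powr s)
         \<ge> measure lborel I * exp (- s * enn2real (total_var F) / measure lborel I)"
    by (rule core) (use assms in auto)
  moreover have "(LINT \<theta>:I|lborel.
            (deriv (Fiter \<omega> F n \<theta>) (\<psi>' \<theta>) / deriv (Fiter \<omega> F n \<theta>) (\<phi>' \<theta>)) powr s) =
     (LINT \<theta>:I|lborel.
            (deriv (Fiter \<omega> F n \<theta>) (\<psi> \<theta>) / deriv (Fiter \<omega> F n \<theta>) (\<phi> \<theta>)) powr s)"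
    by (rule set_lebesgue_integral_cong) (use on in auto)
  ultimately show ?thesis by simp
qed


end
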